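(* Assume $\pi\in\mathcal P_2(\mathbb R^d)$ and let $0<t_0<t_1<\dots<t_K$. Define, for $t_0\le t_k\le t$, $E_{t_k,t}:=\mathbb E\|u_t(Y_t)-u_{t_k}(Y_{t_k})\|^2$. Then $$\sum_{k=0}^{K-1}\int_{t_k}^{t_{k+1}}E_{t_k,t}\,dt\le d\sigma^2\,C_{\mathrm{disc}}.$$
   Context: $\pi$ is a probability measure on $\mathbb R^d$ with Lebesgue density; $X\sim\pi$, $(B_t)$ a standard $d$-dimensional Brownian motion independent of $X$, $\sigma>0$, $Y_t=tX+\sigma B_t$; for $t>0$, $u_t(y)=\int x\,\mathcal N(y;tx,t\sigma^2I_d)\pi(x)dx/\int\mathcal N(y;tx,t\sigma^2I_d)\pi(x)dx$, so $u_t(Y_t)=\mathbb E[X|Y_t]$. $C_{\mathrm{disc}}:=\sum_{k=1}^{K-1}\max\{0,(t_{k+1}-t_k)-(t_k-t_{k-1})\}\frac{1}{t_k}+\frac{t_1-t_0}{t_0}$. *)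

theory Defs
  imports "HOL-Probability.Probability"
begin

definition gauss_density :: "'a::euclidean_space \<Rightarrow> real \<Rightarrow> 'a \<Rightarrow> real" where
  "gauss_density m v y = (2 * pi * v) powr (- real DIM('a) / 2) * exp (- (norm (y - m))\<^sup>2 / (2 * v))"

definition std_BM_indep_of :: "'w measure \<Rightarrow> ('w \<Rightarrow> 'a::euclidean_space) \<Rightarrow> (real \<Rightarrow> 'w \<Rightarrow> 'a) \<Rightarrow> bool" where
  "std_BM_indep_of M X B \<longleftrightarrow>
     (\<forall>t\<ge>0. B t \<in> borel_measurable M) \<and>
     (\<forall>\<omega>\<in>space M. B 0 \<omega> = 0) \<and>
     (\<forall>\<omega>\<in>space M. continuous_on {0..} (\<lambda>t. B t \<omega>)) \<and>
     (\<forall>s t. 0 \<le> s \<and> s < t \<longrightarrow>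
        distr M borel (\<lambda>\<omega>. B t \<omega> - B s \<omega>) = density lborel (gauss_density 0 (t - s))) \<and>
     (\<forall>(n::nat) (s::nat \<Rightarrow> real). s 0 = 0 \<and> (\<forall>i<n. s i < s (Suc i)) \<longrightarrow>
        prob_space.indep_vars M (\<lambda>_. borel)
          (\<lambda>i \<omega>. if i = 0 then X \<omega> else B (s i) \<omega> - B (s (i - 1)) \<omega>) {0..n})"

definition Yproc :: "('w \<Rightarrow> 'a::euclidean_space) \<Rightarrow> (real \<Rightarrow> 'w \<Rightarrow> 'a) \<Rightarrow> real \<Rightarrow> real \<Rightarrow> 'w \<Rightarrow> 'a" where
  "Yproc X B \<sigma> t \<omega> = t *\<^sub>R X \<omega> + \<sigma> *\<^sub>R B t \<omega>"

text \<open>Posterior mean u_t(y), pi having Lebesgue density f.\<close>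
definition post_mean :: "('a::euclidean_space \<Rightarrow> real) \<Rightarrow> real \<Rightarrow> real \<Rightarrow> 'a \<Rightarrow> 'a" where
  "post_mean f \<sigma> t y =
     (1 / (\<integral>x. gauss_density (t *\<^sub>R x) (t * \<sigma>\<^sup>2) y * f x \<partial>lborel)) *\<^sub>R
     (\<integral>x. (gauss_density (t *\<^sub>R x) (t * \<sigma>\<^sup>2) y * f x) *\<^sub>R x \<partial>lborel)"

definition Eerr :: "'w measure \<Rightarrow> ('w \<Rightarrow> 'a::euclidean_space) \<Rightarrow> (real \<Rightarrow> 'w \<Rightarrow> 'a) \<Rightarrow> ('a \<Rightarrow> real) \<Rightarrow> real \<Rightarrow> real \<Rightarrow> real \<Rightarrow> real" where
  "Eerr M X B f \<sigma> s t =
     (\<integral>\<omega>. (norm (post_mean f \<sigma> t (Yproc X B \<sigma> t \<omega>) - post_mean f \<sigma> s (Yproc X B \<sigma> s \<omega>)))\<^sup>2 \<partial>M)"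

definition C_disc :: "(nat \<Rightarrow> real) \<Rightarrow> nat \<Rightarrow> real" where
  "C_disc tt K = (\<Sum>k\<in>{1..K-1}. max 0 ((tt (k+1) - tt k) - (tt k - tt (k-1))) * (1 / tt k))
                 + (tt 1 - tt 0) / tt 0"

end

theory Submission
  imports Defs
begin
lemma gauss_pos: "v > 0 \<Longrightarrow> gauss_density m v y > 0"
  by (simp add: gauss_density_def)

lemma gauss_nonneg: "v > 0 \<Longrightarrow> gauss_density m v y \<ge> 0"
  by (simp add: gauss_density_def)

lemma gauss_bound: "v > 0 \<Longrightarrow> gauss_density (m::'a::euclidean_space) v y \<le> (2 * pi * v) powr (- real DIM('a) / 2)"
  unfolding gauss_density_def by (rule mult_left_le) auto

lemma gauss_meas[measurable (raw)]:
  fixes F G :: "'b \<Rightarrow> 'a::euclidean_space"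
  assumes [measurable]: "F \<in> borel_measurable N" "V \<in> borel_measurable N" "G \<in> borel_measurable N"
  shows "(\<lambda>x. gauss_density (F x) (V x) (G x)) \<in> borel_measurable N"
  unfolding gauss_density_def by measurable

lemma gauss_prod:
  fixes z :: "'a::euclidean_space"
  assumes v: "v > 0"
  shows "gauss_density 0 v z = (\<Prod>b\<in>Basis. normal_density 0 (sqrt v) (z \<bullet> b))"
proof -
  have n: "(norm z)\<^sup>2 = (\<Sum>b\<in>Basis. (z \<bullet> b)\<^sup>2)"
    unfolding power2_norm_eq_inner by (subst euclidean_inner) (simp add: power2_eq_square)
  have "(\<Prod>b\<in>Basis. normal_density 0 (sqrt v) (z \<bullet> b))
      = (\<Prod>b\<in>Basis. exp (- (z \<bullet> b)\<^sup>2 / (2 * v)) / sqrt (2 * pi * v))"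
    using v by (simp add: normal_density_def)
  also have "\<dots> = exp (\<Sum>b\<in>Basis. - (z \<bullet> b)\<^sup>2 / (2 * v)) / sqrt (2 * pi * v) ^ DIM('a)"
    by (simp add: prod_dividef exp_sum)
  also have "(\<Sum>b\<in>Basis. - (z \<bullet> b)\<^sup>2 / (2 * v)) = - (norm z)\<^sup>2 / (2 * v)"
    by (simp add: n sum_divide_distrib[symmetric] sum_negf)
  also have "sqrt (2 * pi * v) ^ DIM('a) = (2 * pi * v) powr (real DIM('a) / 2)"
    using v by (simp add: powr_half_sqrt[symmetric] powr_realpow[symmetric] powr_powr)
  finally show ?thesis using v by (simp add: gauss_density_def powr_minus_divide divide_simps)
qed

lemma nd_int1: "s > 0 \<Longrightarrow> (\<integral>\<^sup>+x. ennreal (normal_density 0 s x) \<partial>lborel) = 1"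
  by (subst nn_integral_eq_integral) auto

lemma nd_int2: "s > 0 \<Longrightarrow> (\<integral>\<^sup>+x. ennreal (normal_density 0 s x * x\<^sup>2) \<partial>lborel) = ennreal (s\<^sup>2)"
proof -
  assume s: "s > 0"
  have h: "has_bochner_integral lborel (\<lambda>x. normal_density 0 s x * x\<^sup>2) (s\<^sup>2)"
    using normal_moment_even[OF s, of 0 1] by (simp add: numeral_2_eq_2)
  show ?thesis
    apply (subst nn_integral_eq_integral)
    using h by (auto simp: has_bochner_integral_iff)
qed

lemma gauss_int1:
  assumes v: "v > 0"
  shows "(\<integral>\<^sup>+z. ennreal (gauss_density 0 v (z::'a::euclidean_space)) \<partial>lborel) = 1"
proof -
  have "(\<integral>\<^sup>+z. ennreal (gauss_density 0 v (z::'a)) \<partial>lborel)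
      = (\<integral>\<^sup>+z. (\<Prod>b\<in>Basis. ennreal (normal_density 0 (sqrt v) ((z::'a) \<bullet> b))) \<partial>lborel)"
    by (rule nn_integral_cong) (use v in \<open>simp add: gauss_prod prod_ennreal\<close>)
  also have "\<dots> = (\<Prod>b\<in>(Basis::'a set). (\<integral>\<^sup>+x. ennreal (normal_density 0 (sqrt v) x) \<partial>lborel))"
    by (rule nn_integral_lborel_prod) auto
  also have "\<dots> = 1" using v by (simp add: nd_int1)
  finally show ?thesis .
qed

lemma gauss_int2:
  assumes v: "v > 0"
  shows "(\<integral>\<^sup>+z. ennreal (gauss_density 0 v (z::'a::euclidean_space) * (norm z)\<^sup>2) \<partial>lborel)
     = ennreal (real DIM('a) * v)"
proof -
  define nd where "nd = normal_density 0 (sqrt v)"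
  have n: "\<And>z::'a. (norm z)\<^sup>2 = (\<Sum>b\<in>Basis. (z \<bullet> b)\<^sup>2)"
    unfolding power2_norm_eq_inner by (subst euclidean_inner) (simp add: power2_eq_square)
  have eq: "ennreal (gauss_density 0 v z * (norm z)\<^sup>2) =
     (\<Sum>b0\<in>Basis. \<Prod>b\<in>Basis. ennreal (if b = b0 then nd (z \<bullet> b) * (z \<bullet> b)\<^sup>2 else nd (z \<bullet> b)))"
    for z :: 'a
  proof -
    have "gauss_density 0 v z * (norm z)\<^sup>2 = (\<Sum>b0\<in>Basis. (\<Prod>b\<in>Basis. nd (z \<bullet> b)) * (z \<bullet> b0)\<^sup>2)"
      using v by (simp add: gauss_prod nd_def n sum_distrib_left)
    also have "\<dots> = (\<Sum>b0\<in>Basis. \<Prod>b\<in>Basis. (if b = b0 then nd (z \<bullet> b) * (z \<bullet> b)\<^sup>2 else nd (z \<bullet> b)))"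
    proof (rule sum.cong[OF refl])
      fix b0 :: 'a assume b0: "b0 \<in> Basis"
      have "(\<Prod>b\<in>Basis. (if b = b0 then nd (z \<bullet> b) * (z \<bullet> b)\<^sup>2 else nd (z \<bullet> b)))
          = (\<Prod>b\<in>Basis. nd (z \<bullet> b) * (if b = b0 then (z \<bullet> b)\<^sup>2 else 1))"
        by (intro prod.cong) auto
      also have "\<dots> = (\<Prod>b\<in>Basis. nd (z \<bullet> b)) * (z \<bullet> b0)\<^sup>2"
        using b0 by (simp add: prod.distrib prod.delta)
      finally show "(\<Prod>b\<in>Basis. nd (z \<bullet> b)) * (z \<bullet> b0)\<^sup>2 = (\<Prod>b\<in>Basis. (if b = b0 then nd (z \<bullet> b) * (z \<bullet> b)\<^sup>2 else nd (z \<bullet> b)))" by simp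
    qed
    finally show ?thesis
      by (simp add: prod_ennreal[symmetric] nd_def sum_ennreal[symmetric] prod_nonneg)
  qed
  have "(\<integral>\<^sup>+z. ennreal (gauss_density 0 v (z::'a) * (norm z)\<^sup>2) \<partial>lborel)
      = (\<Sum>b0\<in>(Basis::'a set). \<integral>\<^sup>+z. (\<Prod>b\<in>Basis. ennreal (if b = b0 then nd (z \<bullet> b) * (z \<bullet> b)\<^sup>2 else nd (z \<bullet> b))) \<partial>lborel)"
    unfolding eq by (rule nn_integral_sum) (unfold nd_def, measurable)
  also have "\<dots> = (\<Sum>b0\<in>(Basis::'a set). \<Prod>b\<in>(Basis::'a set). \<integral>\<^sup>+x. ennreal (if b = b0 then nd x * x\<^sup>2 else nd x) \<partial>lborel)"
    apply (intro sum.cong refl nn_integral_lborel_prod)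
    subgoal for x b by (cases "b = x") (simp_all add: nd_def)
    by auto
  also have "\<dots> = (\<Sum>b0\<in>(Basis::'a set). ennreal v)"
  proof (rule sum.cong[OF refl])
    fix b0 :: 'a assume b0: "b0 \<in> Basis"
    have "(\<Prod>b\<in>(Basis::'a set). \<integral>\<^sup>+x. ennreal (if b = b0 then nd x * x\<^sup>2 else nd x) \<partial>lborel)
        = (\<Prod>b\<in>(Basis::'a set). if b = b0 then ennreal v else 1)"
      using v by (intro prod.cong refl) (auto simp: nd_def nd_int1 nd_int2)
    also have "\<dots> = ennreal v" using b0 by (simp add: prod.delta)
    finally show "(\<Prod>b\<in>(Basis::'a set). \<integral>\<^sup>+x. ennreal (if b = b0 then nd x * x\<^sup>2 else nd x) \<partial>lborel) = ennreal v" .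
  qed
  also have "\<dots> = ennreal (real DIM('a) * v)"
    using v by (simp add: ennreal_of_nat_eq_real_of_nat ennreal_mult)
  finally show ?thesis .
qed

lemma gauss_scale:
  fixes m w :: "'a::euclidean_space"
  assumes s: "\<sigma> > 0" and t: "t > 0"
  shows "\<sigma> ^ DIM('a) * gauss_density m (t * \<sigma>\<^sup>2) (m + \<sigma> *\<^sub>R w) = gauss_density 0 t w"
proof -
  define e where "e = - real DIM('a) / 2"
  have a: "2 * pi * (t * \<sigma>\<^sup>2) = (2 * pi * t) * \<sigma>\<^sup>2" by (simp only: mult.assoc)
  have b: "(2 * pi * (t * \<sigma>\<^sup>2)) powr e = (2 * pi * t) powr e * (\<sigma>\<^sup>2) powr e"
    unfolding a using s t by (intro powr_mult)
  have c: "(\<sigma>\<^sup>2) powr e = \<sigma> powr (- real DIM('a))"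
    proof -
    have h: "\<sigma>\<^sup>2 = \<sigma> powr 2" using s by (simp add: powr_numeral)
    have "(\<sigma>\<^sup>2) powr e = \<sigma> powr (2 * e)" unfolding h by (rule powr_powr)
    also have "2 * e = - real DIM('a)" unfolding e_def by simp
    finally show ?thesis .
  qed
  have d: "\<sigma> ^ DIM('a) * \<sigma> powr (- real DIM('a)) = 1"
  proof -
    have "\<sigma> powr (- real DIM('a)) = inverse (\<sigma> ^ DIM('a))" using s by (simp add: powr_minus powr_realpow)
    thus ?thesis using s by simp
  qed
  have ee: "(norm (\<sigma> *\<^sub>R w))\<^sup>2 / (2 * (t * \<sigma>\<^sup>2)) = (norm w)\<^sup>2 / (2 * t)"
    using s t by (simp add: power_mult_distrib)
  have "\<sigma> ^ DIM('a) * gauss_density m (t * \<sigma>\<^sup>2) (m + \<sigma> *\<^sub>R w)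
      = (\<sigma> ^ DIM('a) * \<sigma> powr (- real DIM('a))) * ((2 * pi * t) powr e * exp (- (norm w)\<^sup>2 / (2 * t)))"
  proof -
    have g: "gauss_density m (t * \<sigma>\<^sup>2) (m + \<sigma> *\<^sub>R w) = (2 * pi * t) powr e * \<sigma> powr (- real DIM('a)) * exp (- ((norm w)\<^sup>2 / (2 * t)))"
      unfolding gauss_density_def e_def[symmetric] b c
      by (simp only: add_diff_cancel_left' minus_divide_left[symmetric] ee)
    show ?thesis unfolding g by (simp only: mult_ac minus_divide_left)
  qed
  also have "\<dots> = gauss_density 0 t w"
    unfolding d gauss_density_def e_def by simp
  finally show ?thesis .
qed

lemma gauss_split:
  fixes v w :: "'a::euclidean_space"
  assumes s: "0 < s" and st: "s < t"
  shows "gauss_density 0 s (v + (s/t) *\<^sub>R w) * gauss_density 0 (t - s) (w - (v + (s/t) *\<^sub>R w))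
       = gauss_density 0 t w * gauss_density 0 (s * (t - s) / t) v"
proof -
  have t: "t > 0" using s st by linarith
  define d where "d = - real DIM('a) / 2"
  have c: "(2 * pi * s) powr d * (2 * pi * (t - s)) powr d = (2 * pi * t) powr d * (2 * pi * (s * (t - s) / t)) powr d"
  proof -
    have "(2 * pi * s) powr d * (2 * pi * (t - s)) powr d = ((2 * pi * s) * (2 * pi * (t - s))) powr d"
      using s st by (subst powr_mult) auto
    also have "(2 * pi * s) * (2 * pi * (t - s)) = (2 * pi * t) * (2 * pi * (s * (t - s) / t))"
      using t by (simp add: field_simps)
    also have "\<dots> powr d = (2 * pi * t) powr d * (2 * pi * (s * (t - s) / t)) powr d"
      using s st by (subst powr_mult) auto
    finally show ?thesis .
  qed
  define P where "P = v \<bullet> v" define Q where "Q = v \<bullet> w" define R where "R = w \<bullet> w"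
  have n1: "(norm (v + (s/t) *\<^sub>R w))\<^sup>2 = P + 2 * (s/t) * Q + (s/t)\<^sup>2 * R"
    unfolding power2_norm_eq_inner P_def Q_def R_def
    by (simp add: inner_add_left inner_add_right inner_commute power2_eq_square algebra_simps)
  have n2: "(norm (w - (v + (s/t) *\<^sub>R w)))\<^sup>2 = P - 2 * (1 - s/t) * Q + (1 - s/t)\<^sup>2 * R"
    unfolding power2_norm_eq_inner P_def Q_def R_def
    by (simp add: inner_add_left inner_add_right inner_diff_left inner_diff_right inner_commute power2_eq_square algebra_simps)
  have n3: "(norm w)\<^sup>2 = R" "(norm v)\<^sup>2 = P" unfolding power2_norm_eq_inner P_def R_def by simp_all
  have e: "- (P + 2 * (s/t) * Q + (s/t)\<^sup>2 * R) / (2 * s) + - (P - 2 * (1 - s/t) * Q + (1 - s/t)\<^sup>2 * R) / (2 * (t - s))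
         = - R / (2 * t) + - P / (2 * (s * (t - s) / t))"
    using s st t by (simp add: field_simps power2_eq_square)
  have "gauss_density 0 s (v + (s/t) *\<^sub>R w) * gauss_density 0 (t - s) (w - (v + (s/t) *\<^sub>R w))
      = ((2 * pi * s) powr d * (2 * pi * (t - s)) powr d) *
        exp (- (P + 2 * (s/t) * Q + (s/t)\<^sup>2 * R) / (2 * s) + - (P - 2 * (1 - s/t) * Q + (1 - s/t)\<^sup>2 * R) / (2 * (t - s)))"
    unfolding gauss_density_def d_def[symmetric] exp_add by (simp add: n1 n2 mult_ac)
  also have "\<dots> = ((2 * pi * t) powr d * (2 * pi * (s * (t - s) / t)) powr d) * exp (- R / (2 * t) + - P / (2 * (s * (t - s) / t)))"
    by (simp only: c e)
  also have "\<dots> = gauss_density 0 t w * gauss_density 0 (s * (t - s) / t) v"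
    unfolding gauss_density_def d_def[symmetric] exp_add by (simp add: n3 mult_ac)
  finally show ?thesis .
qed

lemma proj_formula:
  fixes W :: "'a::euclidean_space \<Rightarrow> real"
  assumes Wm[measurable]: "W \<in> borel_measurable lborel" and Wn: "\<And>x. W x \<ge> 0"
    and i1: "integrable lborel W" and i2: "integrable lborel (\<lambda>x. W x * (norm x)\<^sup>2)"
  shows "integrable lborel (\<lambda>x. W x *\<^sub>R x)"
    and "integrable lborel (\<lambda>x. W x * (norm (x - c))\<^sup>2)"
    and "(\<integral>x. W x * (norm (x - c))\<^sup>2 \<partial>lborel) =
         (\<integral>x. W x * (norm x)\<^sup>2 \<partial>lborel) - 2 * ((\<integral>x. W x *\<^sub>R x \<partial>lborel) \<bullet> c) + (\<integral>x. W x \<partial>lborel) * (norm c)\<^sup>2"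
proof -
  show i3: "integrable lborel (\<lambda>x. W x *\<^sub>R x)"
  proof (rule Bochner_Integration.integrable_bound[OF Bochner_Integration.integrable_add[OF i1 i2]])
    show "(\<lambda>x. W x *\<^sub>R x) \<in> borel_measurable lborel" by measurable
    show "AE x in lborel. norm (W x *\<^sub>R x) \<le> norm (W x + W x * (norm x)\<^sup>2)"
    proof (rule AE_I2)
      fix x :: 'a
      have "norm x \<le> 1 + (norm x)\<^sup>2"
        using sum_squares_bound[of 1 "norm x"] zero_le_power2[of "norm x"] norm_ge_zero[of x] by (simp only: power_one mult_1_right)
      hence "W x * norm x \<le> W x * (1 + (norm x)\<^sup>2)" using Wn[of x] by (rule mult_left_mono)
      thus "norm (W x *\<^sub>R x) \<le> norm (W x + W x * (norm x)\<^sup>2)"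
        using Wn[of x] by (simp add: algebra_simps)
    qed
  qed
  have eq: "\<And>x. W x * (norm (x - c))\<^sup>2 = W x * (norm x)\<^sup>2 - 2 * ((W x *\<^sub>R x) \<bullet> c) + W x * (norm c)\<^sup>2"
    by (simp add: power2_norm_eq_inner inner_diff_left inner_diff_right inner_commute algebra_simps)
  have i4: "integrable lborel (\<lambda>x. (W x *\<^sub>R x) \<bullet> c)"
    using i3 by (rule integrable_inner_left)
  show "integrable lborel (\<lambda>x. W x * (norm (x - c))\<^sup>2)"
    unfolding eq using i1 i2 i4 by auto
  show "(\<integral>x. W x * (norm (x - c))\<^sup>2 \<partial>lborel) =
         (\<integral>x. W x * (norm x)\<^sup>2 \<partial>lborel) - 2 * ((\<integral>x. W x *\<^sub>R x \<partial>lborel) \<bullet> c) + (\<integral>x. W x \<partial>lborel) * (norm c)\<^sup>2"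
    unfolding eq using i1 i2 i3 i4 by (simp add: integral_inner_left[symmetric])
qed

lemma proj_identity:
  fixes W :: "'a::euclidean_space \<Rightarrow> real"
  assumes Wm[measurable]: "W \<in> borel_measurable lborel" and Wn: "\<And>x. W x \<ge> 0"
    and i1: "integrable lborel W" and i2: "integrable lborel (\<lambda>x. W x * (norm x)\<^sup>2)"
  defines "u \<equiv> (1 / (\<integral>x. W x \<partial>lborel)) *\<^sub>R (\<integral>x. W x *\<^sub>R x \<partial>lborel)"
  shows "(\<integral>\<^sup>+x. ennreal (W x * (norm (x - c))\<^sup>2) \<partial>lborel) =
         (\<integral>\<^sup>+x. ennreal (W x * (norm (x - u))\<^sup>2) \<partial>lborel) + (\<integral>\<^sup>+x. ennreal (W x * (norm (c - u))\<^sup>2) \<partial>lborel)"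
proof -
  define Z where "Z = (\<integral>x. W x \<partial>lborel)"
  define V where "V = (\<integral>x. W x *\<^sub>R x \<partial>lborel)"
  define A where "A = (\<integral>x. W x * (norm x)\<^sup>2 \<partial>lborel)"
  note pf = proj_formula[OF Wm Wn i1 i2]
  have VZ: "V = Z *\<^sub>R u"
  proof (cases "Z = 0")
    case True
    have "AE x in lborel. W x = 0"
      using True i1 Wn unfolding Z_def by (subst integral_nonneg_eq_0_iff_AE[symmetric]) auto
    hence "V = (\<integral>x. 0 *\<^sub>R x \<partial>lborel)" unfolding V_def
      by (intro integral_cong_AE) (auto elim: AE_mp simp: measurable_ident)
    thus ?thesis by (simp add: True)
  next
    case False
    thus ?thesis by (simp add: u_def Z_def[symmetric] V_def[symmetric])
  qed
  have r: "(\<integral>x. W x * (norm (x - c))\<^sup>2 \<partial>lborel) = (\<integral>x. W x * (norm (x - u))\<^sup>2 \<partial>lborel) + Z * (norm (c - u))\<^sup>2"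
    unfolding pf(3) Z_def[symmetric] V_def[symmetric] A_def[symmetric] VZ
    by (simp add: power2_norm_eq_inner inner_diff_left inner_diff_right inner_commute algebra_simps)
  have "(\<integral>\<^sup>+x. ennreal (W x * (norm (x - c))\<^sup>2) \<partial>lborel) = ennreal (\<integral>x. W x * (norm (x - c))\<^sup>2 \<partial>lborel)"
    using pf(2) Wn by (intro nn_integral_eq_integral) auto
  also have "\<dots> = ennreal (\<integral>x. W x * (norm (x - u))\<^sup>2 \<partial>lborel) + ennreal (Z * (norm (c - u))\<^sup>2)"
    unfolding r using Wn i1 pf(2)[of u] unfolding Z_def
    by (intro ennreal_plus integral_nonneg_AE) (auto intro!: integral_nonneg_AE)
  also have "ennreal (\<integral>x. W x * (norm (x - u))\<^sup>2 \<partial>lborel) = (\<integral>\<^sup>+x. ennreal (W x * (norm (x - u))\<^sup>2) \<partial>lborel)"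
    using pf(2) Wn by (intro nn_integral_eq_integral[symmetric]) auto
  also have "ennreal (Z * (norm (c - u))\<^sup>2) = (\<integral>\<^sup>+x. ennreal (W x * (norm (c - u))\<^sup>2) \<partial>lborel)"
    unfolding Z_def using i1 Wn by (subst nn_integral_eq_integral) auto
  finally show ?thesis .
qed

locale setting =
  fixes f :: "'a::euclidean_space \<Rightarrow> real" and \<sigma> :: real
  assumes fm[measurable]: "f \<in> borel_measurable borel" and fn: "\<And>x. f x \<ge> 0"
    and fp: "prob_space (density lborel f)"
    and f2: "integrable (density lborel f) (\<lambda>x. (norm x)\<^sup>2)"
    and sig: "\<sigma> > 0"
begin

lemma f_nn1: "(\<integral>\<^sup>+x. ennreal (f x) \<partial>lborel) = 1"
  using prob_space.emeasure_space_1[OF fp] by (simp add: emeasure_density)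

lemma f_int: "integrable lborel f"
  using f_nn1 fn by (intro integrableI_nonneg) auto

lemma f_int2: "integrable lborel (\<lambda>x. f x * (norm x)\<^sup>2)"
  using f2 fn by (subst (asm) integrable_density) auto

lemma post_mean_meas[measurable]: "(\<lambda>y. post_mean f \<sigma> t y) \<in> borel_measurable borel"
  unfolding post_mean_def by measurable

definition W :: "real \<Rightarrow> 'a \<Rightarrow> 'a \<Rightarrow> real" where
  "W t y x = gauss_density (t *\<^sub>R x) (t * \<sigma>\<^sup>2) y * f x"

lemma W_meas[measurable (raw)]:
  assumes [measurable]: "F \<in> borel_measurable N" "G \<in> borel_measurable N"
  shows "(\<lambda>\<omega>. W t (F \<omega>) (G \<omega>)) \<in> borel_measurable N"
  unfolding W_def by measurable

lemma W_nn: "t > 0 \<Longrightarrow> W t y x \<ge> 0"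
  unfolding W_def using sig fn by (simp add: gauss_nonneg)

lemma W_int:
  assumes t: "t > 0"
  shows "integrable lborel (W t y)" "integrable lborel (\<lambda>x. W t y x * (norm x)\<^sup>2)"
proof -
  define C where "C = (2 * pi * (t * \<sigma>\<^sup>2)) powr (- real DIM('a) / 2)"
  have tv: "t * \<sigma>\<^sup>2 > 0" using t sig by simp
  have b: "gauss_density (t *\<^sub>R x) (t * \<sigma>\<^sup>2) y \<le> C" for x
    unfolding C_def by (rule gauss_bound[OF tv])
  have g0: "gauss_density (t *\<^sub>R x) (t * \<sigma>\<^sup>2) y \<ge> 0" for x by (rule gauss_nonneg[OF tv])
  have C0: "\<bar>C\<bar> = C" unfolding C_def by simp
  have Wb: "W t y x \<le> C * f x" for x using mult_right_mono[OF b fn] by (simp add: W_def mult.commute)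
  have Wb2: "W t y x * (norm x)\<^sup>2 \<le> C * (f x * (norm x)\<^sup>2)" for x
    using mult_right_mono[OF Wb zero_le_power2] by (simp add: mult.assoc)
  have Wn: "W t y x \<ge> 0" for x using W_nn[OF t] .
  have Cf: "C * f x \<ge> 0" for x using Wb Wn order_trans by blast
  show "integrable lborel (W t y)"
    apply (rule Bochner_Integration.integrable_bound[OF integrable_mult_left[OF f_int, of C]])
    subgoal unfolding W_def by measurable
    using Wb Wn Cf by (intro AE_I2) (simp add: mult.commute[of _ C])
  show "integrable lborel (\<lambda>x. W t y x * (norm x)\<^sup>2)"
    apply (rule Bochner_Integration.integrable_bound[OF integrable_mult_left[OF f_int2, of C]])
    subgoal unfolding W_def by measurable
    using Wb2 Wn Cf fn C0 by (intro AE_I2) (simp add: abs_mult mult_ac)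
qed

lemma post_mean_W: "post_mean f \<sigma> t y = (1 / (\<integral>x. W t y x \<partial>lborel)) *\<^sub>R (\<integral>x. W t y x *\<^sub>R x \<partial>lborel)"
  unfolding post_mean_def W_def ..

lemma inner_change:
  fixes x :: 'a
  assumes t: "t > 0" and H[measurable]: "H \<in> borel_measurable borel"
  shows "(\<integral>\<^sup>+w. ennreal (gauss_density 0 t w) * H (t *\<^sub>R x + \<sigma> *\<^sub>R w) \<partial>lborel)
       = (\<integral>\<^sup>+y. ennreal (gauss_density (t *\<^sub>R x) (t * \<sigma>\<^sup>2) y) * H y \<partial>lborel)"
proof -
  have s0: "\<sigma> \<noteq> 0" using sig by simp
  let ?F = "\<lambda>y. ennreal (gauss_density (t *\<^sub>R x) (t * \<sigma>\<^sup>2) y) * H y"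
  have "(\<integral>\<^sup>+y. ?F y \<partial>lborel) = (\<integral>\<^sup>+y. ?F y \<partial>density (distr lborel borel (\<lambda>w. t *\<^sub>R x + \<sigma> *\<^sub>R w)) (\<lambda>_. \<bar>\<sigma>\<bar> ^ DIM('a)))"
    using lborel_affine[OF s0, of "t *\<^sub>R x"] by (rule arg_cong)
  also have "\<dots> = (\<integral>\<^sup>+y. \<bar>\<sigma>\<bar> ^ DIM('a) * ?F y \<partial>distr lborel borel (\<lambda>w. t *\<^sub>R x + \<sigma> *\<^sub>R w))"
    by (subst nn_integral_density) auto
  also have "\<dots> = (\<integral>\<^sup>+w. \<bar>\<sigma>\<bar> ^ DIM('a) * ?F (t *\<^sub>R x + \<sigma> *\<^sub>R w) \<partial>lborel)"
    by (subst nn_integral_distr) auto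
  also have "\<dots> = (\<integral>\<^sup>+w. ennreal (gauss_density 0 t w) * H (t *\<^sub>R x + \<sigma> *\<^sub>R w) \<partial>lborel)"
  proof (rule nn_integral_cong)
    fix w :: 'a
    have "ennreal (\<bar>\<sigma>\<bar> ^ DIM('a)) * ennreal (gauss_density (t *\<^sub>R x) (t * \<sigma>\<^sup>2) (t *\<^sub>R x + \<sigma> *\<^sub>R w))
        = ennreal (\<sigma> ^ DIM('a) * gauss_density (t *\<^sub>R x) (t * \<sigma>\<^sup>2) (t *\<^sub>R x + \<sigma> *\<^sub>R w))"
      using sig gauss_nonneg[of "t * \<sigma>\<^sup>2"] t by (subst ennreal_mult) auto
    also have "\<dots> = ennreal (gauss_density 0 t w)" using gauss_scale[OF sig t, of "t *\<^sub>R x" w] by simp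
    finally show "\<bar>\<sigma>\<bar> ^ DIM('a) * ?F (t *\<^sub>R x + \<sigma> *\<^sub>R w) = ennreal (gauss_density 0 t w) * H (t *\<^sub>R x + \<sigma> *\<^sub>R w)"
      by (simp add: mult.assoc[symmetric] ennreal_power[symmetric])
  qed
  finally show ?thesis ..
qed

end

context setting begin

lemma T1:
  assumes t: "t > 0" and H[measurable]: "H \<in> borel_measurable (borel \<Otimes>\<^sub>M borel)"
  shows "(\<integral>\<^sup>+x. ennreal (f x) * (\<integral>\<^sup>+w. ennreal (gauss_density 0 t w) * H (x, t *\<^sub>R x + \<sigma> *\<^sub>R w) \<partial>lborel) \<partial>lborel)
       = (\<integral>\<^sup>+y. \<integral>\<^sup>+x. ennreal (W t y x) * H (x, y) \<partial>lborel \<partial>lborel)"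
proof -
  have "(\<integral>\<^sup>+x. ennreal (f x) * (\<integral>\<^sup>+w. ennreal (gauss_density 0 t w) * H (x, t *\<^sub>R x + \<sigma> *\<^sub>R w) \<partial>lborel) \<partial>lborel)
      = (\<integral>\<^sup>+x. ennreal (f x) * (\<integral>\<^sup>+y. ennreal (gauss_density (t *\<^sub>R x) (t * \<sigma>\<^sup>2) y) * H (x, y) \<partial>lborel) \<partial>lborel)"
    by (intro nn_integral_cong arg_cong2[where f="(*)"] refl inner_change[OF t]) measurable
  also have "\<dots> = (\<integral>\<^sup>+x. \<integral>\<^sup>+y. ennreal (f x) * (ennreal (gauss_density (t *\<^sub>R x) (t * \<sigma>\<^sup>2) y) * H (x, y)) \<partial>lborel \<partial>lborel)"
    by (intro nn_integral_cong nn_integral_cmult[symmetric]) measurable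
  also have "\<dots> = (\<integral>\<^sup>+y. \<integral>\<^sup>+x. ennreal (f x) * (ennreal (gauss_density (t *\<^sub>R x) (t * \<sigma>\<^sup>2) y) * H (x, y)) \<partial>lborel \<partial>lborel)"
    by (rule lborel_pair.Fubini'[symmetric]) measurable
  also have "\<dots> = (\<integral>\<^sup>+y. \<integral>\<^sup>+x. ennreal (W t y x) * H (x, y) \<partial>lborel \<partial>lborel)"
    using t sig fn by (intro nn_integral_cong) (simp add: W_def ennreal_mult gauss_nonneg mult_ac)
  finally show ?thesis .
qed

definition J :: "real \<Rightarrow> ennreal" where
  "J t = (\<integral>\<^sup>+x. ennreal (f x) * (\<integral>\<^sup>+w. ennreal (gauss_density 0 t w) *
            ennreal ((norm (x - post_mean f \<sigma> t (t *\<^sub>R x + \<sigma> *\<^sub>R w)))\<^sup>2) \<partial>lborel) \<partial>lborel)"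

lemma C_lemma:
  assumes t: "t > 0" and c[measurable]: "c \<in> borel_measurable borel"
  shows "(\<integral>\<^sup>+x. ennreal (f x) * (\<integral>\<^sup>+w. ennreal (gauss_density 0 t w) *
            ennreal ((norm (x - c (t *\<^sub>R x + \<sigma> *\<^sub>R w)))\<^sup>2) \<partial>lborel) \<partial>lborel)
       = J t + (\<integral>\<^sup>+x. ennreal (f x) * (\<integral>\<^sup>+w. ennreal (gauss_density 0 t w) *
            ennreal ((norm (c (t *\<^sub>R x + \<sigma> *\<^sub>R w) - post_mean f \<sigma> t (t *\<^sub>R x + \<sigma> *\<^sub>R w)))\<^sup>2) \<partial>lborel) \<partial>lborel)"
proof -
  let ?u = "post_mean f \<sigma> t"
  have eq: "(\<integral>\<^sup>+x. ennreal (W t y x) * ennreal ((norm (x - c y))\<^sup>2) \<partial>lborel)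
     = (\<integral>\<^sup>+x. ennreal (W t y x) * ennreal ((norm (x - ?u y))\<^sup>2) \<partial>lborel)
     + (\<integral>\<^sup>+x. ennreal (W t y x) * ennreal ((norm (c y - ?u y))\<^sup>2) \<partial>lborel)" for y
  proof -
    have m: "W t y \<in> borel_measurable lborel" by measurable
    show ?thesis
      using proj_identity[OF m W_nn[OF t] W_int[OF t], of "c y"] W_nn[OF t]
      by (simp add: ennreal_mult post_mean_W)
  qed
  have "(\<integral>\<^sup>+x. ennreal (f x) * (\<integral>\<^sup>+w. ennreal (gauss_density 0 t w) *
            ennreal ((norm (x - c (t *\<^sub>R x + \<sigma> *\<^sub>R w)))\<^sup>2) \<partial>lborel) \<partial>lborel)
      = (\<integral>\<^sup>+y. \<integral>\<^sup>+x. ennreal (W t y x) * ennreal ((norm (x - c y))\<^sup>2) \<partial>lborel \<partial>lborel)"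
    using T1[OF t, of "\<lambda>(x, y). ennreal ((norm (x - c y))\<^sup>2)"] by simp
  also have "\<dots> = (\<integral>\<^sup>+y. (\<integral>\<^sup>+x. ennreal (W t y x) * ennreal ((norm (x - ?u y))\<^sup>2) \<partial>lborel)
     + (\<integral>\<^sup>+x. ennreal (W t y x) * ennreal ((norm (c y - ?u y))\<^sup>2) \<partial>lborel) \<partial>lborel)"
    unfolding eq ..
  also have "\<dots> = (\<integral>\<^sup>+y. \<integral>\<^sup>+x. ennreal (W t y x) * ennreal ((norm (x - ?u y))\<^sup>2) \<partial>lborel \<partial>lborel)
     + (\<integral>\<^sup>+y. \<integral>\<^sup>+x. ennreal (W t y x) * ennreal ((norm (c y - ?u y))\<^sup>2) \<partial>lborel \<partial>lborel)"
    by (rule nn_integral_add) measurable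
  also have "(\<integral>\<^sup>+y. \<integral>\<^sup>+x. ennreal (W t y x) * ennreal ((norm (x - ?u y))\<^sup>2) \<partial>lborel \<partial>lborel) = J t"
    unfolding J_def using T1[OF t, of "\<lambda>(x, y). ennreal ((norm (x - ?u y))\<^sup>2)"] by simp
  also have "(\<integral>\<^sup>+y. \<integral>\<^sup>+x. ennreal (W t y x) * ennreal ((norm (c y - ?u y))\<^sup>2) \<partial>lborel \<partial>lborel)
     = (\<integral>\<^sup>+x. ennreal (f x) * (\<integral>\<^sup>+w. ennreal (gauss_density 0 t w) *
            ennreal ((norm (c (t *\<^sub>R x + \<sigma> *\<^sub>R w) - ?u (t *\<^sub>R x + \<sigma> *\<^sub>R w)))\<^sup>2) \<partial>lborel) \<partial>lborel)"
    using T1[OF t, of "\<lambda>(x, y). ennreal ((norm (c y - ?u y))\<^sup>2)"] by simp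
  finally show ?thesis .
qed

end

lemma lborel_translate:
  fixes c :: "'a::euclidean_space"
  assumes [measurable]: "F \<in> borel_measurable borel"
  shows "(\<integral>\<^sup>+z. F z \<partial>lborel) = (\<integral>\<^sup>+w. F (c + w) \<partial>lborel)"
proof -
  have "(\<integral>\<^sup>+z. F z \<partial>lborel) = (\<integral>\<^sup>+z. F z \<partial>distr lborel borel ((+) c))"
    by (simp add: lborel_distr_plus)
  also have "\<dots> = (\<integral>\<^sup>+w. F (c + w) \<partial>lborel)"
    by (subst nn_integral_distr) auto
  finally show ?thesis .
qed

context setting begin

lemma J_bound:
  assumes t: "t > 0"
  shows "J t \<le> ennreal (real DIM('a) * \<sigma>\<^sup>2 / t)"
proof -
  let ?c = "\<lambda>y::'a. (1 / t) *\<^sub>R y"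
  have "J t \<le> J t + (\<integral>\<^sup>+x. ennreal (f x) * (\<integral>\<^sup>+w. ennreal (gauss_density 0 t w) *
            ennreal ((norm (?c (t *\<^sub>R x + \<sigma> *\<^sub>R w) - post_mean f \<sigma> t (t *\<^sub>R x + \<sigma> *\<^sub>R w)))\<^sup>2) \<partial>lborel) \<partial>lborel)"
    by simp
  also have "\<dots> = (\<integral>\<^sup>+x. ennreal (f x) * (\<integral>\<^sup>+w. ennreal (gauss_density 0 t w) *
            ennreal ((norm (x - ?c (t *\<^sub>R x + \<sigma> *\<^sub>R w)))\<^sup>2) \<partial>lborel) \<partial>lborel)"
    by (rule C_lemma[OF t, symmetric]) measurable
  also have "\<dots> = (\<integral>\<^sup>+x. ennreal (f x) * ennreal (real DIM('a) * \<sigma>\<^sup>2 / t) \<partial>lborel)"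
  proof (intro nn_integral_cong arg_cong2[where f="(*)"] refl)
    fix x :: 'a
    have n: "(norm (x - ?c (t *\<^sub>R x + \<sigma> *\<^sub>R w)))\<^sup>2 = (\<sigma> / t)\<^sup>2 * (norm w)\<^sup>2" for w
    proof -
      have "x - ?c (t *\<^sub>R x + \<sigma> *\<^sub>R w) = - ((\<sigma> / t) *\<^sub>R w)" using t by (simp add: algebra_simps)
      thus ?thesis using sig t by (simp add: power_mult_distrib power_divide)
    qed
    have "(\<integral>\<^sup>+w. ennreal (gauss_density 0 t w) * ennreal ((norm (x - ?c (t *\<^sub>R x + \<sigma> *\<^sub>R w)))\<^sup>2) \<partial>lborel)
        = (\<integral>\<^sup>+w. ennreal ((\<sigma> / t)\<^sup>2) * ennreal (gauss_density 0 t (w::'a) * (norm w)\<^sup>2) \<partial>lborel)"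
      by (intro nn_integral_cong) (use t in \<open>simp add: n ennreal_mult[symmetric] gauss_nonneg mult_ac\<close>)
    also have "\<dots> = ennreal ((\<sigma> / t)\<^sup>2) * ennreal (real DIM('a) * t)"
      by (subst nn_integral_cmult) (auto simp: gauss_int2[OF t])
    also have "\<dots> = ennreal (real DIM('a) * \<sigma>\<^sup>2 / t)"
      using t by (simp add: ennreal_mult[symmetric] power2_eq_square mult_ac)
    finally show "(\<integral>\<^sup>+w. ennreal (gauss_density 0 t w) * ennreal ((norm (x - ?c (t *\<^sub>R x + \<sigma> *\<^sub>R w)))\<^sup>2) \<partial>lborel) = ennreal (real DIM('a) * \<sigma>\<^sup>2 / t)" .
  qed
  also have "\<dots> = ennreal (real DIM('a) * \<sigma>\<^sup>2 / t)"
    by (subst nn_integral_multc) (auto simp: f_nn1)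
  finally show ?thesis .
qed

end

lemma lborel_translate2:
  fixes c :: "'a::euclidean_space"
  assumes [measurable]: "F \<in> borel_measurable borel"
  shows "(\<integral>\<^sup>+z. F z \<partial>lborel) = (\<integral>\<^sup>+w. F (w + c) \<partial>lborel)"
  using lborel_translate[of F c] by (simp add: add.commute)

lemma lborel_translate3:
  fixes c :: "'a::euclidean_space"
  assumes [measurable]: "F \<in> borel_measurable borel"
  shows "(\<integral>\<^sup>+z. F z \<partial>lborel) = (\<integral>\<^sup>+w. F (w - c) \<partial>lborel)"
  using lborel_translate2[of F "- c"] by simp

context setting begin

lemma T3_inner:
  fixes G :: "'a \<times> 'a \<Rightarrow> ennreal"
  assumes s: "0 < s" "s < t" and G[measurable]: "G \<in> borel_measurable (borel \<Otimes>\<^sub>M borel)"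
  shows "(\<integral>\<^sup>+z1. ennreal (gauss_density 0 s z1) * (\<integral>\<^sup>+z2. ennreal (gauss_density 0 (t-s) z2) * G (z1, z2) \<partial>lborel) \<partial>lborel)
    = (\<integral>\<^sup>+w. \<integral>\<^sup>+v. ennreal (gauss_density 0 t w) * (ennreal (gauss_density 0 (s*(t-s)/t) v) *
          G (v + (s/t) *\<^sub>R w, w - (v + (s/t) *\<^sub>R w))) \<partial>lborel \<partial>lborel)"
proof -
  have t: "t > 0" "t - s > 0" "s * (t - s) / t > 0" using s by auto
  have "(\<integral>\<^sup>+z1. ennreal (gauss_density 0 s z1) * (\<integral>\<^sup>+z2. ennreal (gauss_density 0 (t-s) z2) * G (z1, z2) \<partial>lborel) \<partial>lborel)
      = (\<integral>\<^sup>+z1. \<integral>\<^sup>+w. ennreal (gauss_density 0 s z1) * (ennreal (gauss_density 0 (t-s) (w - z1)) * G (z1, w - z1)) \<partial>lborel \<partial>lborel)"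
  proof (intro nn_integral_cong)
    fix z1 :: 'a
    have "ennreal (gauss_density 0 s z1) * (\<integral>\<^sup>+z2. ennreal (gauss_density 0 (t-s) z2) * G (z1, z2) \<partial>lborel)
       = (\<integral>\<^sup>+z2. ennreal (gauss_density 0 s z1) * (ennreal (gauss_density 0 (t-s) z2) * G (z1, z2)) \<partial>lborel)"
      by (rule nn_integral_cmult[symmetric]) measurable
    also have "\<dots> = (\<integral>\<^sup>+w. ennreal (gauss_density 0 s z1) * (ennreal (gauss_density 0 (t-s) (w - z1)) * G (z1, w - z1)) \<partial>lborel)"
      by (rule lborel_translate3) measurable
    finally show "ennreal (gauss_density 0 s z1) * (\<integral>\<^sup>+z2. ennreal (gauss_density 0 (t-s) z2) * G (z1, z2) \<partial>lborel)
       = (\<integral>\<^sup>+w. ennreal (gauss_density 0 s z1) * (ennreal (gauss_density 0 (t-s) (w - z1)) * G (z1, w - z1)) \<partial>lborel)" .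
  qed
  also have "\<dots> = (\<integral>\<^sup>+w. \<integral>\<^sup>+z1. ennreal (gauss_density 0 s z1) * (ennreal (gauss_density 0 (t-s) (w - z1)) * G (z1, w - z1)) \<partial>lborel \<partial>lborel)"
    by (rule lborel_pair.Fubini'[symmetric]) measurable
  also have "\<dots> = (\<integral>\<^sup>+w. \<integral>\<^sup>+v. ennreal (gauss_density 0 s (v + (s/t) *\<^sub>R w)) * (ennreal (gauss_density 0 (t-s) (w - (v + (s/t) *\<^sub>R w))) * G (v + (s/t) *\<^sub>R w, w - (v + (s/t) *\<^sub>R w))) \<partial>lborel \<partial>lborel)"
    by (intro nn_integral_cong lborel_translate2) measurable
  also have "\<dots> = (\<integral>\<^sup>+w. \<integral>\<^sup>+v. ennreal (gauss_density 0 t w) * (ennreal (gauss_density 0 (s*(t-s)/t) v) *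
          G (v + (s/t) *\<^sub>R w, w - (v + (s/t) *\<^sub>R w))) \<partial>lborel \<partial>lborel)"
  proof (intro nn_integral_cong)
    fix w v :: 'a
    have "ennreal (gauss_density 0 s (v + (s/t) *\<^sub>R w)) * ennreal (gauss_density 0 (t-s) (w - (v + (s/t) *\<^sub>R w)))
        = ennreal (gauss_density 0 t w) * ennreal (gauss_density 0 (s*(t-s)/t) v)"
      using gauss_split[OF s, of v w] s t by (simp add: ennreal_mult[symmetric] gauss_nonneg)
    thus "ennreal (gauss_density 0 s (v + (s/t) *\<^sub>R w)) * (ennreal (gauss_density 0 (t-s) (w - (v + (s/t) *\<^sub>R w))) * G (v + (s/t) *\<^sub>R w, w - (v + (s/t) *\<^sub>R w)))
        = ennreal (gauss_density 0 t w) * (ennreal (gauss_density 0 (s*(t-s)/t) v) * G (v + (s/t) *\<^sub>R w, w - (v + (s/t) *\<^sub>R w)))"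
      by (metis mult.assoc)
  qed
  finally show ?thesis .
qed

end

context setting begin

lemma T3:
  fixes H :: "'a \<times> 'a \<times> 'a \<Rightarrow> ennreal"
  assumes s: "0 < s" "s < t" and H[measurable]: "H \<in> borel_measurable (borel \<Otimes>\<^sub>M borel \<Otimes>\<^sub>M borel)"
  shows "(\<integral>\<^sup>+x. ennreal (f x) * (\<integral>\<^sup>+z1. ennreal (gauss_density 0 s z1) * (\<integral>\<^sup>+z2. ennreal (gauss_density 0 (t-s) z2) * H (x, z1, z2) \<partial>lborel) \<partial>lborel) \<partial>lborel)
   = (\<integral>\<^sup>+v. ennreal (gauss_density 0 (s*(t-s)/t) v) * (\<integral>\<^sup>+x. ennreal (f x) * (\<integral>\<^sup>+w. ennreal (gauss_density 0 t w) * H (x, v + (s/t) *\<^sub>R w, w - (v + (s/t) *\<^sub>R w)) \<partial>lborel) \<partial>lborel) \<partial>lborel)"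
proof -
  let ?K = "\<lambda>x w v. ennreal (gauss_density 0 t w) * (ennreal (gauss_density 0 (s*(t-s)/t) v) *
          H (x, v + (s/t) *\<^sub>R w, w - (v + (s/t) *\<^sub>R w)))"
  have "(\<integral>\<^sup>+x. ennreal (f x) * (\<integral>\<^sup>+z1. ennreal (gauss_density 0 s z1) * (\<integral>\<^sup>+z2. ennreal (gauss_density 0 (t-s) z2) * H (x, z1, z2) \<partial>lborel) \<partial>lborel) \<partial>lborel)
      = (\<integral>\<^sup>+x. ennreal (f x) * (\<integral>\<^sup>+w. \<integral>\<^sup>+v. ?K x w v \<partial>lborel \<partial>lborel) \<partial>lborel)"
    by (intro nn_integral_cong arg_cong2[where f="(*)"] refl T3_inner[OF s]) measurable
  also have "\<dots> = (\<integral>\<^sup>+x. \<integral>\<^sup>+w. \<integral>\<^sup>+v. ennreal (f x) * ?K x w v \<partial>lborel \<partial>lborel \<partial>lborel)"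
  proof (intro nn_integral_cong)
    fix x :: 'a
    have "ennreal (f x) * (\<integral>\<^sup>+w. \<integral>\<^sup>+v. ?K x w v \<partial>lborel \<partial>lborel) = (\<integral>\<^sup>+w. ennreal (f x) * \<integral>\<^sup>+v. ?K x w v \<partial>lborel \<partial>lborel)"
      by (rule nn_integral_cmult[symmetric]) measurable
    also have "\<dots> = (\<integral>\<^sup>+w. \<integral>\<^sup>+v. ennreal (f x) * ?K x w v \<partial>lborel \<partial>lborel)"
      by (intro nn_integral_cong nn_integral_cmult[symmetric]) measurable
    finally show "ennreal (f x) * (\<integral>\<^sup>+w. \<integral>\<^sup>+v. ?K x w v \<partial>lborel \<partial>lborel) = (\<integral>\<^sup>+w. \<integral>\<^sup>+v. ennreal (f x) * ?K x w v \<partial>lborel \<partial>lborel)" .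
  qed
  also have "\<dots> = (\<integral>\<^sup>+x. \<integral>\<^sup>+v. \<integral>\<^sup>+w. ennreal (f x) * ?K x w v \<partial>lborel \<partial>lborel \<partial>lborel)"
    by (intro nn_integral_cong lborel_pair.Fubini') measurable
  also have "\<dots> = (\<integral>\<^sup>+v. \<integral>\<^sup>+x. \<integral>\<^sup>+w. ennreal (f x) * ?K x w v \<partial>lborel \<partial>lborel \<partial>lborel)"
    by (rule lborel_pair.Fubini'[symmetric]) measurable
  also have "\<dots> = (\<integral>\<^sup>+v. ennreal (gauss_density 0 (s*(t-s)/t) v) * (\<integral>\<^sup>+x. ennreal (f x) * (\<integral>\<^sup>+w. ennreal (gauss_density 0 t w) * H (x, v + (s/t) *\<^sub>R w, w - (v + (s/t) *\<^sub>R w)) \<partial>lborel) \<partial>lborel) \<partial>lborel)"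
  proof (intro nn_integral_cong)
    fix v :: 'a
    have "(\<integral>\<^sup>+x. \<integral>\<^sup>+w. ennreal (f x) * ?K x w v \<partial>lborel \<partial>lborel)
        = (\<integral>\<^sup>+x. ennreal (gauss_density 0 (s*(t-s)/t) v) * (ennreal (f x) * (\<integral>\<^sup>+w. ennreal (gauss_density 0 t w) * H (x, v + (s/t) *\<^sub>R w, w - (v + (s/t) *\<^sub>R w)) \<partial>lborel)) \<partial>lborel)"
    proof (intro nn_integral_cong)
      fix x :: 'a
      have "(\<integral>\<^sup>+w. ennreal (f x) * ?K x w v \<partial>lborel)
         = (\<integral>\<^sup>+w. (ennreal (gauss_density 0 (s*(t-s)/t) v) * ennreal (f x)) * (ennreal (gauss_density 0 t w) * H (x, v + (s/t) *\<^sub>R w, w - (v + (s/t) *\<^sub>R w))) \<partial>lborel)"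
        by (intro nn_integral_cong) (simp add: mult_ac)
      also have "\<dots> = (ennreal (gauss_density 0 (s*(t-s)/t) v) * ennreal (f x)) * (\<integral>\<^sup>+w. ennreal (gauss_density 0 t w) * H (x, v + (s/t) *\<^sub>R w, w - (v + (s/t) *\<^sub>R w)) \<partial>lborel)"
        by (rule nn_integral_cmult) measurable
      finally show "(\<integral>\<^sup>+w. ennreal (f x) * ?K x w v \<partial>lborel)
        = ennreal (gauss_density 0 (s*(t-s)/t) v) * (ennreal (f x) * (\<integral>\<^sup>+w. ennreal (gauss_density 0 t w) * H (x, v + (s/t) *\<^sub>R w, w - (v + (s/t) *\<^sub>R w)) \<partial>lborel))"
        by (simp add: mult.assoc)
    qed
    also have "\<dots> = ennreal (gauss_density 0 (s*(t-s)/t) v) * (\<integral>\<^sup>+x. ennreal (f x) * (\<integral>\<^sup>+w. ennreal (gauss_density 0 t w) * H (x, v + (s/t) *\<^sub>R w, w - (v + (s/t) *\<^sub>R w)) \<partial>lborel) \<partial>lborel)"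
      by (rule nn_integral_cmult) measurable
    finally show "(\<integral>\<^sup>+x. \<integral>\<^sup>+w. ennreal (f x) * ?K x w v \<partial>lborel \<partial>lborel) = \<dots>" .
  qed
  finally show ?thesis .
qed

end

context setting begin

definition L3 :: "real \<Rightarrow> real \<Rightarrow> ('a \<times> 'a \<times> 'a \<Rightarrow> ennreal) \<Rightarrow> ennreal" where
  "L3 s t H = (\<integral>\<^sup>+x. ennreal (f x) * (\<integral>\<^sup>+z1. ennreal (gauss_density 0 s z1) *
      (\<integral>\<^sup>+z2. ennreal (gauss_density 0 (t-s) z2) * H (x, z1, z2) \<partial>lborel) \<partial>lborel) \<partial>lborel)"

lemma key_a:
  assumes s: "0 < s" "s < t"
  shows "L3 s t (\<lambda>(x, z1, z2). ennreal ((norm (x - post_mean f \<sigma> s (s *\<^sub>R x + \<sigma> *\<^sub>R z1)))\<^sup>2)) = J s"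
proof -
  have ts: "t - s > 0" using s by simp
  show ?thesis
    unfolding L3_def J_def
    apply (intro nn_integral_cong arg_cong2[where f="(*)"] refl)
    apply (simp only: prod.case)
    apply (subst nn_integral_multc)
    using gauss_int1[OF ts, where 'a='a] by auto
qed

lemma key_b:
  assumes s: "0 < s" "s < t"
  shows "L3 s t (\<lambda>(x, z1, z2). ennreal ((norm (x - post_mean f \<sigma> t (t *\<^sub>R x + \<sigma> *\<^sub>R (z1 + z2))))\<^sup>2)) = J t"
proof -
  have r: "s * (t - s) / t > 0" using s by simp
  have e2: "v + (s/t) *\<^sub>R w + (w - (v + (s/t) *\<^sub>R w)) = w" for v w :: 'a by simp
  have "L3 s t (\<lambda>(x, z1, z2). ennreal ((norm (x - post_mean f \<sigma> t (t *\<^sub>R x + \<sigma> *\<^sub>R (z1 + z2))))\<^sup>2))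
     = (\<integral>\<^sup>+v. ennreal (gauss_density 0 (s*(t-s)/t) (v::'a)) * J t \<partial>lborel)"
    unfolding L3_def J_def
    apply (subst T3[OF s])
    subgoal by measurable
    by (simp only: prod.case e2)
  also have "\<dots> = J t" by (subst nn_integral_multc) (auto simp: gauss_int1[OF r, where 'a='a])
  finally show ?thesis .
qed

lemma key_c:
  assumes s: "0 < s" "s < t"
  shows "L3 s t (\<lambda>(x, z1, z2). ennreal ((norm (x - post_mean f \<sigma> s (s *\<^sub>R x + \<sigma> *\<^sub>R z1)))\<^sup>2))
       = J t + L3 s t (\<lambda>(x, z1, z2). ennreal ((norm (post_mean f \<sigma> t (t *\<^sub>R x + \<sigma> *\<^sub>R (z1 + z2)) - post_mean f \<sigma> s (s *\<^sub>R x + \<sigma> *\<^sub>R z1)))\<^sup>2))"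
proof -
  have r: "s * (t - s) / t > 0" and t: "t > 0" using s by auto
  let ?a = "s / t"
  define c where "c v y = post_mean f \<sigma> s (?a *\<^sub>R y + \<sigma> *\<^sub>R v)" for v y :: 'a
  have cm[measurable]: "c v \<in> borel_measurable borel" for v unfolding c_def by measurable
  have cm2[measurable]: "(\<lambda>(v, y). c v y) \<in> borel_measurable (borel \<Otimes>\<^sub>M borel)" unfolding c_def by measurable
  define D where "D v = (\<integral>\<^sup>+x. ennreal (f x) * (\<integral>\<^sup>+w. ennreal (gauss_density 0 t w) *
            ennreal ((norm (c v (t *\<^sub>R x + \<sigma> *\<^sub>R w) - post_mean f \<sigma> t (t *\<^sub>R x + \<sigma> *\<^sub>R w)))\<^sup>2) \<partial>lborel) \<partial>lborel)" for v
  have e1: "s *\<^sub>R x + \<sigma> *\<^sub>R (v + ?a *\<^sub>R w) = ?a *\<^sub>R (t *\<^sub>R x + \<sigma> *\<^sub>R w) + \<sigma> *\<^sub>R v" for x v w :: 'a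
    using t by (simp add: algebra_simps)
  have e2: "v + ?a *\<^sub>R w + (w - (v + ?a *\<^sub>R w)) = w" for v w :: 'a by simp
  have "L3 s t (\<lambda>(x, z1, z2). ennreal ((norm (x - post_mean f \<sigma> s (s *\<^sub>R x + \<sigma> *\<^sub>R z1)))\<^sup>2))
     = (\<integral>\<^sup>+v. ennreal (gauss_density 0 (s*(t-s)/t) v) * (\<integral>\<^sup>+x. ennreal (f x) * (\<integral>\<^sup>+w. ennreal (gauss_density 0 t w) *
            ennreal ((norm (x - c v (t *\<^sub>R x + \<sigma> *\<^sub>R w)))\<^sup>2) \<partial>lborel) \<partial>lborel) \<partial>lborel)"
    unfolding L3_def by (subst T3[OF s]) (measurable, simp add: e1 c_def)
  also have "\<dots> = (\<integral>\<^sup>+v. ennreal (gauss_density 0 (s*(t-s)/t) v) * (J t + D v) \<partial>lborel)"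
    unfolding D_def by (intro nn_integral_cong arg_cong2[where f="(*)"] refl C_lemma[OF t]) measurable
  also have "\<dots> = (\<integral>\<^sup>+v. ennreal (gauss_density 0 (s*(t-s)/t) (v::'a)) * J t + ennreal (gauss_density 0 (s*(t-s)/t) v) * D v \<partial>lborel)"
    by (simp add: distrib_left)
  also have "\<dots> = (\<integral>\<^sup>+v. ennreal (gauss_density 0 (s*(t-s)/t) (v::'a)) * J t \<partial>lborel) + (\<integral>\<^sup>+v. ennreal (gauss_density 0 (s*(t-s)/t) v) * D v \<partial>lborel)"
    by (rule nn_integral_add) (unfold D_def c_def, measurable)+
  also have "(\<integral>\<^sup>+v. ennreal (gauss_density 0 (s*(t-s)/t) (v::'a)) * J t \<partial>lborel) = J t"
    by (subst nn_integral_multc) (auto simp: gauss_int1[OF r, where 'a='a])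
  also have "(\<integral>\<^sup>+v. ennreal (gauss_density 0 (s*(t-s)/t) v) * D v \<partial>lborel)
     = L3 s t (\<lambda>(x, z1, z2). ennreal ((norm (post_mean f \<sigma> t (t *\<^sub>R x + \<sigma> *\<^sub>R (z1 + z2)) - post_mean f \<sigma> s (s *\<^sub>R x + \<sigma> *\<^sub>R z1)))\<^sup>2))"
    unfolding L3_def D_def by (subst T3[OF s]) (measurable, simp add: e1 c_def norm_minus_commute)
  finally show ?thesis .
qed

end

lemma prob_density_gauss: "v > 0 \<Longrightarrow> prob_space (density lborel (gauss_density 0 v :: 'a::euclidean_space \<Rightarrow> real))"
  by (intro prob_spaceI) (simp add: emeasure_density gauss_int1)

context setting begin

lemma law3:
  fixes M :: "'w measure" and X :: "'w \<Rightarrow> 'a" and B :: "real \<Rightarrow> 'w \<Rightarrow> 'a"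
  assumes PM: "prob_space M" and Xm: "X \<in> borel_measurable M" and Xd: "distr M borel X = density lborel f"
    and BM: "std_BM_indep_of M X B" and s: "0 < s" "s < t"
    and H[measurable]: "H \<in> borel_measurable (borel \<Otimes>\<^sub>M borel \<Otimes>\<^sub>M borel)"
  shows "(\<integral>\<^sup>+\<omega>. H (X \<omega>, B s \<omega>, B t \<omega> - B s \<omega>) \<partial>M) = L3 s t H"
proof -
  interpret prob_space M by fact
  have Bm: "\<And>u. u \<ge> 0 \<Longrightarrow> B u \<in> borel_measurable M"
    and B0: "\<And>\<omega>. \<omega> \<in> space M \<Longrightarrow> B 0 \<omega> = 0"
    and Bd: "\<And>a b. 0 \<le> a \<Longrightarrow> a < b \<Longrightarrow> distr M borel (\<lambda>\<omega>. B b \<omega> - B a \<omega>) = density lborel (gauss_density 0 (b - a))"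
    and Bi: "\<And>n sq. sq 0 = 0 \<Longrightarrow> (\<forall>i<n. sq i < sq (Suc i)) \<Longrightarrow>
        indep_vars (\<lambda>_. borel) (\<lambda>i \<omega>. if i = 0 then X \<omega> else B (sq i) \<omega> - B (sq (i - 1)) \<omega>) {0..n}"
    using BM unfolding std_BM_indep_of_def by auto
  define sq where "sq i = (if i = 0 then 0 else if i = 1 then s else t)" for i :: nat
  define Z where "Z i \<omega> = (if i = 0 then X \<omega> else B (sq i) \<omega> - B (sq (i - 1)) \<omega>)" for i \<omega>
  have sq0: "sq i \<ge> 0" for i using s by (simp add: sq_def)
  have ind: "indep_vars (\<lambda>_. borel) Z {0..2}"
    unfolding Z_def
  proof (rule Bi)
    show "sq 0 = 0" by (simp add: sq_def)
    show "\<forall>i<2. sq i < sq (Suc i)" using s by (auto simp: sq_def less_Suc_eq)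
  qed
  have Zm[measurable]: "Z i \<in> borel_measurable M" for i
    unfolding Z_def using Xm Bm[OF sq0] by (cases "i = 0") auto
  define gi where "gi i = (if i = 0 then f else if i = 1 then gauss_density 0 s else gauss_density 0 (t - s))" for i :: nat
  have gim[measurable]: "gi i \<in> borel_measurable borel" for i
    unfolding gi_def by (cases "i = 0"; cases "i = 1") simp_all
  have Zd: "distr M borel (Z i) = density lborel (gi i)" if i: "i \<in> {0..2}" for i
  proof -
    consider "i = 0" | "i = 1" | "i = 2" using i by (auto simp: numeral_2_eq_2 le_Suc_eq)
    thus ?thesis
    proof cases
      case 1
      have "Z i = X" using 1 by (simp add: Z_def fun_eq_iff)
      thus ?thesis using Xd 1 by (simp add: gi_def)
    next
      case 2
      have "Z i = (\<lambda>\<omega>. B s \<omega> - B 0 \<omega>)" using 2 by (simp add: Z_def sq_def fun_eq_iff)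
      thus ?thesis using Bd[of 0 s] s 2 by (simp add: gi_def)
    next
      case 3
      have "Z i = (\<lambda>\<omega>. B t \<omega> - B s \<omega>)" using 3 by (simp add: Z_def sq_def fun_eq_iff)
      thus ?thesis using Bd[of s t] s 3 by (simp add: gi_def)
    qed
  qed
  have D: "distr M (\<Pi>\<^sub>M i\<in>{0..2}. borel) (\<lambda>\<omega>. \<lambda>i\<in>{0..2}. Z i \<omega>) = (\<Pi>\<^sub>M i\<in>{0..2}. density lborel (gi i))"
  proof -
    have "distr M (\<Pi>\<^sub>M i\<in>{0..2}. borel) (\<lambda>\<omega>. \<lambda>i\<in>{0..2}. Z i \<omega>) = (\<Pi>\<^sub>M i\<in>{0..2::nat}. distr M borel (Z i))"
      using indep_vars_iff_distr_eq_PiM'[where I="{0..2::nat}" and M'="\<lambda>_. borel" and X=Z] ind by auto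
    also have "\<dots> = (\<Pi>\<^sub>M i\<in>{0..2}. density lborel (gi i))"
      by (intro PiM_cong refl) (simp add: Zd)
    finally show ?thesis .
  qed
  have sf: "sigma_finite_measure (density lborel (gi i))" for i
  proof (rule prob_space_imp_sigma_finite)
    have "t - s > 0" using s by simp
    thus "prob_space (density lborel (gi i))"
      using fp prob_density_gauss[OF s(1), where 'a='a] prob_density_gauss[of "t - s", where 'a='a] by (simp add: gi_def)
  qed
  interpret P: product_sigma_finite "\<lambda>i. density lborel (gi i)"
    unfolding product_sigma_finite_def using sf by blast
  define H' where "H' \<phi> = H (\<phi> 0, \<phi> 1, \<phi> (2::nat))" for \<phi> :: "nat \<Rightarrow> 'a"
  have H'm0: "H' \<in> borel_measurable (\<Pi>\<^sub>M i\<in>{0..2}. borel)"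
    unfolding H'_def by measurable
  have eq012: "{0..2::nat} = insert 0 (insert 1 {2})" by auto
  have setsI: "sets (\<Pi>\<^sub>M i\<in>I. density lborel (gi i)) = sets (\<Pi>\<^sub>M i\<in>I. borel)" for I
    by (auto intro!: sets_PiM_cong)
  have H'm1: "H' \<in> borel_measurable (\<Pi>\<^sub>M i\<in>{0..2}. density lborel (gi i))"
    using H'm0 measurable_cong_sets[OF setsI[of "{0..2}"] refl] by simp
  have "(\<integral>\<^sup>+\<omega>. H (X \<omega>, B s \<omega>, B t \<omega> - B s \<omega>) \<partial>M) = (\<integral>\<^sup>+\<omega>. H' (\<lambda>i\<in>{0..2}. Z i \<omega>) \<partial>M)"
    using s by (intro nn_integral_cong) (simp add: H'_def Z_def sq_def B0)
  also have "\<dots> = (\<integral>\<^sup>+\<phi>. H' \<phi> \<partial>distr M (\<Pi>\<^sub>M i\<in>{0..2}. borel) (\<lambda>\<omega>. \<lambda>i\<in>{0..2}. Z i \<omega>))"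
    by (subst nn_integral_distr) (auto intro!: measurable_restrict H'm0)
  also have "\<dots> = (\<integral>\<^sup>+\<phi>. H' \<phi> \<partial>(\<Pi>\<^sub>M i\<in>{0..2}. density lborel (gi i)))"
    by (simp only: D)
  also have "{0..2::nat} = insert 0 (insert 1 {2})" by auto
  also have "(\<integral>\<^sup>+\<phi>. H' \<phi> \<partial>(\<Pi>\<^sub>M i\<in>insert 0 (insert 1 {2}). density lborel (gi i)))
     = (\<integral>\<^sup>+x. (\<integral>\<^sup>+\<phi>. H' (\<phi>(0 := x)) \<partial>(\<Pi>\<^sub>M i\<in>insert 1 {2}. density lborel (gi i))) \<partial>density lborel (gi 0))"
    apply (rule P.product_nn_integral_insert_rev)
    using H'm1 unfolding eq012 by auto
  also have "\<dots> = (\<integral>\<^sup>+x. (\<integral>\<^sup>+z1. (\<integral>\<^sup>+z2. H (x, z1, z2) \<partial>density lborel (gi 2)) \<partial>density lborel (gi 1)) \<partial>density lborel (gi 0))"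
  proof (intro nn_integral_cong)
    fix x assume "x \<in> space (density lborel (gi 0))"
    have "(\<integral>\<^sup>+\<phi>. H' (\<phi>(0 := x)) \<partial>(\<Pi>\<^sub>M i\<in>insert 1 {2}. density lborel (gi i)))
       = (\<integral>\<^sup>+z1. (\<integral>\<^sup>+\<phi>. H' ((\<phi>(1 := z1))(0 := x)) \<partial>(\<Pi>\<^sub>M i\<in>{2}. density lborel (gi i))) \<partial>density lborel (gi 1))"
    proof (rule P.product_nn_integral_insert_rev)
      have "(\<lambda>\<phi>. H' (\<phi>(0 := x))) = (\<lambda>\<phi>. H (x, \<phi> 1, \<phi> 2))" by (simp add: H'_def fun_eq_iff)
      moreover have "(\<lambda>\<phi>. H (x, \<phi> 1, \<phi> (2::nat))) \<in> borel_measurable (\<Pi>\<^sub>M i\<in>insert 1 {2}. borel)"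
        by measurable
      ultimately show "(\<lambda>\<phi>. H' (\<phi>(0 := x))) \<in> borel_measurable (\<Pi>\<^sub>M i\<in>insert 1 {2}. density lborel (gi i))"
        using measurable_cong_sets[OF setsI refl] by simp
    qed simp_all
    also have "\<dots> = (\<integral>\<^sup>+z1. (\<integral>\<^sup>+z2. H (x, z1, z2) \<partial>density lborel (gi 2)) \<partial>density lborel (gi 1))"
    proof (intro nn_integral_cong)
      fix z1
      have "(\<integral>\<^sup>+\<phi>. H' ((\<phi>(1 := z1))(0 := x)) \<partial>(\<Pi>\<^sub>M i\<in>{2}. density lborel (gi i)))
          = (\<integral>\<^sup>+\<phi>. H (x, z1, \<phi> 2) \<partial>(\<Pi>\<^sub>M i\<in>{2}. density lborel (gi i)))"
        by (simp add: H'_def)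
      also have "\<dots> = (\<integral>\<^sup>+z2. H (x, z1, z2) \<partial>density lborel (gi 2))"
        by (rule P.product_nn_integral_singleton) simp
      finally show "(\<integral>\<^sup>+\<phi>. H' ((\<phi>(1 := z1))(0 := x)) \<partial>(\<Pi>\<^sub>M i\<in>{2}. density lborel (gi i))) = (\<integral>\<^sup>+z2. H (x, z1, z2) \<partial>density lborel (gi 2))" .
    qed
    finally show "(\<integral>\<^sup>+\<phi>. H' (\<phi>(0 := x)) \<partial>(\<Pi>\<^sub>M i\<in>insert 1 {2}. density lborel (gi i))) = (\<integral>\<^sup>+z1. (\<integral>\<^sup>+z2. H (x, z1, z2) \<partial>density lborel (gi 2)) \<partial>density lborel (gi 1))" .
  qed
  also have "\<dots> = L3 s t H"
    unfolding L3_def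
    apply (subst nn_integral_density, measurable)+
    by (simp add: gi_def)
  finally show ?thesis .
qed

end

lemma lbint_le:
  fixes a b C :: real and F :: "real \<Rightarrow> real"
  assumes ab: "a \<le> b" and FC: "\<And>x. a \<le> x \<Longrightarrow> x \<le> b \<Longrightarrow> F x \<le> C" and C: "C \<ge> 0"
  shows "(LBINT x=a..b. F x) \<le> C * (b - a)"
proof (cases "interval_lebesgue_integrable lborel a b F")
  case True
  have ci: "interval_lebesgue_integrable lborel a b (\<lambda>x. C)" by simp
  have "(LBINT x=a..b. F x) = (LBINT x:{a<..<b}. F x)"
    using ab by (simp add: interval_lebesgue_integral_le_eq)
  also have "\<dots> \<le> (LBINT x:{a<..<b}. C)"
    using True ci ab FC
    by (intro set_integral_mono) (auto simp: interval_lebesgue_integrable_def)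
  also have "\<dots> = C * (b - a)"
    using interval_lebesgue_integral_le_eq[of "ereal a" "ereal b" lborel "\<lambda>x. C"] ab by simp
  finally show ?thesis .
next
  case False
  hence "(LBINT x=a..b. F x) = 0"
    using ab by (simp add: interval_lebesgue_integral_le_eq interval_lebesgue_integrable_def
        set_lebesgue_integral_def set_integrable_def not_integrable_integral_eq)
  thus ?thesis using ab C by simp
qed

lemma integral_le_enn2real:
  fixes g :: "'b \<Rightarrow> real"
  assumes "\<And>x. g x \<ge> 0"
  shows "integral\<^sup>L N g \<le> enn2real (\<integral>\<^sup>+x. ennreal (g x) \<partial>N)"
proof (cases "integrable N g")
  case True
  thus ?thesis using assms by (subst integral_eq_nn_integral) auto
next
  case False
  thus ?thesis by (simp add: not_integrable_integral_eq)
qed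

lemma sum_bound:
  fixes h m tt :: "nat \<Rightarrow> real" and D :: real and K :: nat
  assumes K: "K \<ge> 1" and pos: "\<And>k. k \<le> K \<Longrightarrow> tt k > 0"
    and m0: "\<And>k. k \<le> K \<Longrightarrow> 0 \<le> m k" and mb: "\<And>k. k \<le> K \<Longrightarrow> m k \<le> D / tt k"
    and mono: "\<And>k. k < K \<Longrightarrow> m (Suc k) \<le> m k"
    and inc: "\<And>k. k < K \<Longrightarrow> tt k < tt (Suc k)"
  shows "(\<Sum>k<K. (tt (Suc k) - tt k) * (m k - m (Suc k))) \<le> D * C_disc tt K"
proof -
  define h where "h k = tt (Suc k) - tt k" for k
  have main: "(\<Sum>k<n. h k * (m k - m (Suc k))) \<le>
      D * (h 0 / tt 0 + (\<Sum>k\<in>{1..n-1}. max 0 (h k - h (k - 1)) * (1 / tt k))) - h (n - 1) * m n"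
    if "1 \<le> n" "n \<le> K" for n
    using that
  proof (induction n rule: dec_induct)
    case base
    have "h 0 * m 0 \<le> h 0 * (D / tt 0)"
      using mb[of 0] inc[of 0] K by (intro mult_left_mono) (auto simp: h_def)
    thus ?case by (simp add: algebra_simps)
  next
    case (step n)
    have n1: "Suc n - 1 = n" "n - 1 < n" using step by auto
    have IH: "(\<Sum>k<n. h k * (m k - m (Suc k))) \<le>
      D * (h 0 / tt 0 + (\<Sum>k\<in>{1..n-1}. max 0 (h k - h (k - 1)) * (1 / tt k))) - h (n - 1) * m n"
      using step by simp
    have key: "(h n - h (n - 1)) * m n \<le> D * (max 0 (h n - h (n - 1)) * (1 / tt n))"
    proof (cases "h n - h (n - 1) \<ge> 0")
      case True
      have "(h n - h (n - 1)) * m n \<le> (h n - h (n - 1)) * (D / tt n)"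
        using True mb[of n] step by (intro mult_left_mono) auto
      thus ?thesis using True by (simp add: algebra_simps)
    next
      case False
      have "(h n - h (n - 1)) * m n \<le> 0" using False m0[of n] step by (simp add: mult_nonpos_nonneg)
      thus ?thesis using False by simp
    qed
    have s: "{1..n} = insert n {1..n-1}" using step by auto
    have ss: "(\<Sum>k\<in>{1..n}. max 0 (h k - h (k - 1)) * (1 / tt k)) = max 0 (h n - h (n - 1)) * (1 / tt n) + (\<Sum>k\<in>{1..n-1}. max 0 (h k - h (k - 1)) * (1 / tt k))"
      unfolding s using step by (subst sum.insert) auto
    have "(\<Sum>k<Suc n. h k * (m k - m (Suc k))) = (\<Sum>k<n. h k * (m k - m (Suc k))) + h n * (m n - m (Suc n))"
      by simp
    also have "\<dots> \<le> D * (h 0 / tt 0 + (\<Sum>k\<in>{1..n-1}. max 0 (h k - h (k - 1)) * (1 / tt k))) - h (n - 1) * m n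
        + h n * (m n - m (Suc n))" using IH by simp
    also have "\<dots> \<le> D * (h 0 / tt 0 + (\<Sum>k\<in>{1..n-1}. max 0 (h k - h (k - 1)) * (1 / tt k)))
        + D * (max 0 (h n - h (n - 1)) * (1 / tt n)) - h n * m (Suc n)"
      using key by (simp add: algebra_simps)
    also have "\<dots> = D * (h 0 / tt 0 + (\<Sum>k\<in>{1..n}. max 0 (h k - h (k - 1)) * (1 / tt k))) - h n * m (Suc n)"
      unfolding ss by (simp add: algebra_simps)
    finally show ?case by simp
  qed
  have "h (K - 1) * m K \<ge> 0"
    using inc[of "K - 1"] m0[of K] K by (simp add: h_def)
  hence "(\<Sum>k<K. h k * (m k - m (Suc k))) \<le> D * (h 0 / tt 0 + (\<Sum>k\<in>{1..K-1}. max 0 (h k - h (k - 1)) * (1 / tt k)))"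
    using main[of K] K by simp
  also have "h 0 / tt 0 + (\<Sum>k\<in>{1..K-1}. max 0 (h k - h (k - 1)) * (1 / tt k)) = C_disc tt K"
  proof -
    have "(\<Sum>k\<in>{1..K-1}. max 0 (h k - h (k - 1)) * (1 / tt k)) =
        (\<Sum>k\<in>{1..K-1}. max 0 ((tt (k+1) - tt k) - (tt k - tt (k-1))) * (1 / tt k))"
      by (intro sum.cong refl) (auto simp: h_def)
    thus ?thesis unfolding C_disc_def by (simp add: h_def)
  qed
  finally show ?thesis unfolding h_def .
qed

theorem lemma9:
  fixes M :: "'w measure" and X :: "'w \<Rightarrow> 'a::euclidean_space" and B :: "real \<Rightarrow> 'w \<Rightarrow> 'a"
    and f :: "'a \<Rightarrow> real" and \<sigma> :: real and K :: nat and tt :: "nat \<Rightarrow> real"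
  assumes "prob_space M"
    and "f \<in> borel_measurable borel" and "\<And>x. f x \<ge> 0"
    and "prob_space (density lborel f)"
    and "integrable (density lborel f) (\<lambda>x. (norm x)\<^sup>2)"
    and "X \<in> borel_measurable M"
    and "distr M borel X = density lborel f"
    and "std_BM_indep_of M X B"
    and "\<sigma> > 0"
    and "K \<ge> 1"
    and "tt 0 > 0" and "\<And>k. k < K \<Longrightarrow> tt k < tt (Suc k)"
  shows "(\<Sum>k<K. (LBINT s=tt k..tt (Suc k). Eerr M X B f \<sigma> (tt k) s))
           \<le> real DIM('a) * \<sigma>\<^sup>2 * C_disc tt K"
proof -
  note PM = assms(1) and Xm = assms(6) and Xd = assms(7) and BM = assms(8)
  interpret S: setting f \<sigma>
    by (rule setting.intro[OF assms(2) assms(3) assms(4) assms(5) assms(9)])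
  define D where "D = real DIM('a) * \<sigma>\<^sup>2"
  have D0: "D \<ge> 0" unfolding D_def by simp
  define Ep where "Ep s t = (\<integral>\<^sup>+\<omega>. ennreal ((norm (post_mean f \<sigma> t (Yproc X B \<sigma> t \<omega>) - post_mean f \<sigma> s (Yproc X B \<sigma> s \<omega>)))\<^sup>2) \<partial>M)" for s t
  have Jfin: "S.J t < top" if "t > 0" for t
    by (rule le_less_trans[OF S.J_bound[OF that]]) simp
  have Jrel: "S.J s = S.J t + Ep s t" if st: "0 < s" "s < t" for s t
  proof -
    have "Ep s t = (\<integral>\<^sup>+\<omega>. (\<lambda>(x, z1, z2). ennreal ((norm (post_mean f \<sigma> t (t *\<^sub>R x + \<sigma> *\<^sub>R (z1 + z2)) - post_mean f \<sigma> s (s *\<^sub>R x + \<sigma> *\<^sub>R z1)))\<^sup>2))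
              (X \<omega>, B s \<omega>, B t \<omega> - B s \<omega>) \<partial>M)"
      unfolding Ep_def Yproc_def by (intro nn_integral_cong) simp
    also have "\<dots> = S.L3 s t (\<lambda>(x, z1, z2). ennreal ((norm (post_mean f \<sigma> t (t *\<^sub>R x + \<sigma> *\<^sub>R (z1 + z2)) - post_mean f \<sigma> s (s *\<^sub>R x + \<sigma> *\<^sub>R z1)))\<^sup>2))"
      by (rule S.law3[OF PM Xm Xd BM st]) measurable
    finally have E: "Ep s t = S.L3 s t (\<lambda>(x, z1, z2). ennreal ((norm (post_mean f \<sigma> t (t *\<^sub>R x + \<sigma> *\<^sub>R (z1 + z2)) - post_mean f \<sigma> s (s *\<^sub>R x + \<sigma> *\<^sub>R z1)))\<^sup>2))" .
    show ?thesis
      using S.key_a[OF st] S.key_c[OF st] E by simp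
  qed
  have Jmono: "S.J t \<le> S.J s" if "0 < s" "s \<le> t" for s t
  proof (cases "s = t")
    case False thus ?thesis using Jrel[of s t] that by simp
  qed simp
  have Epr: "enn2real (Ep s t) = enn2real (S.J s) - enn2real (S.J t)" if st: "0 < s" "s < t" for s t
  proof -
    have "Ep s t < top" using Jfin[of s] Jrel[OF st] st by (auto simp: top_unique)
    thus ?thesis using Jrel[OF st] Jfin[of t] st by (simp add: enn2real_plus)
  qed
  have Eerr_le: "Eerr M X B f \<sigma> s t \<le> enn2real (Ep s t)" for s t
    unfolding Eerr_def Ep_def by (rule integral_le_enn2real) simp
  have ttpos: "tt k > 0" if "k \<le> K" for k
    using that
  proof (induction k)
    case (Suc k) thus ?case using assms(12)[of k] by simp
  qed (use assms(11) in simp)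
  define mm where "mm k = enn2real (S.J (tt k))" for k
  have mm0: "0 \<le> mm k" for k unfolding mm_def by simp
  have mmb: "mm k \<le> D / tt k" if "k \<le> K" for k
  proof -
    have "mm k \<le> enn2real (ennreal (D / tt k))"
      unfolding mm_def D_def using S.J_bound[OF ttpos[OF that]] by (intro enn2real_mono) simp_all
    thus ?thesis using D0 ttpos[OF that] by simp
  qed
  have mmmono: "mm (Suc k) \<le> mm k" if "k < K" for k
    unfolding mm_def using Jmono[of "tt k" "tt (Suc k)"] ttpos[of k] that assms(12)[OF that] Jfin[of "tt k"]
    by (intro enn2real_mono) auto
  have int_le: "(LBINT s=tt k..tt (Suc k). Eerr M X B f \<sigma> (tt k) s) \<le> (mm k - mm (Suc k)) * (tt (Suc k) - tt k)"
    if k: "k < K" for k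
  proof (rule lbint_le)
    show "tt k \<le> tt (Suc k)" using assms(12)[OF k] by simp
    show "0 \<le> mm k - mm (Suc k)" using mmmono[OF k] by simp
    fix x assume x: "tt k \<le> x" "x \<le> tt (Suc k)"
    have tk: "tt k > 0" using ttpos[of k] k by simp
    show "Eerr M X B f \<sigma> (tt k) x \<le> mm k - mm (Suc k)"
    proof (cases "x = tt k")
      case True
      thus ?thesis using mmmono[OF k] by (simp add: Eerr_def)
    next
      case False
      hence lt: "tt k < x" using x by simp
      have a: "Eerr M X B f \<sigma> (tt k) x \<le> enn2real (S.J (tt k)) - enn2real (S.J x)"
        using Eerr_le[of "tt k" x] Epr[OF tk lt] by simp
      have b: "enn2real (S.J (tt (Suc k))) \<le> enn2real (S.J x)"
        using Jmono[of x "tt (Suc k)"] x lt tk Jfin[of x] by (intro enn2real_mono) auto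
      show ?thesis using a b unfolding mm_def by linarith
    qed
  qed
  have "(\<Sum>k<K. (LBINT s=tt k..tt (Suc k). Eerr M X B f \<sigma> (tt k) s)) \<le> (\<Sum>k<K. (tt (Suc k) - tt k) * (mm k - mm (Suc k)))"
    by (intro sum_mono) (simp add: int_le mult.commute)
  also have "\<dots> \<le> D * C_disc tt K"
    using assms(10) ttpos mm0 mmb mmmono assms(12) by (rule sum_bound[where m=mm and tt=tt and K=K and D=D])
  finally show ?thesis unfolding D_def .
qed

end
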